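(* Let $(D,v^* )$ be a neighbor-acyclic instance such that $D$ has no source. Then $v^*$ is a 3-king of $D$, i.e., every vertex of $D$ is reachable from $v^*$ by a directed path of length at most $3$.
   Context: A tournament is a digraph with exactly one arc between every pair of distinct vertices. An instance $(D,v^* )$ (tournament $D$, vertex $v^*$) is neighbor-acyclic if $D[N_{\mathrm{in}}(v^* )]$ and $D[N_{\mathrm{out}}(v^* )]$ are both acyclic. A source is a vertex of in-degree $0$. *)

theory Defs
  imports Main
begin

definition tournament :: "'a set \<Rightarrow> ('a \<Rightarrow> 'a \<Rightarrow> bool) \<Rightarrow> bool" where
  "tournament V A \<longleftrightarrow> finite V
     \<and> (\<forall>u v. A u v \<longrightarrow> u \<in> V \<and> v \<in> V)
     \<and> (\<forall>v. \<not> A v v)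
     \<and> (\<forall>u\<in>V. \<forall>v\<in>V. u \<noteq> v \<longrightarrow> (A u v \<longleftrightarrow> \<not> A v u))"

definition in_nbrs :: "'a set \<Rightarrow> ('a \<Rightarrow> 'a \<Rightarrow> bool) \<Rightarrow> 'a \<Rightarrow> 'a set" where
  "in_nbrs V A v = {u \<in> V. A u v}"

definition out_nbrs :: "'a set \<Rightarrow> ('a \<Rightarrow> 'a \<Rightarrow> bool) \<Rightarrow> 'a \<Rightarrow> 'a set" where
  "out_nbrs V A v = {u \<in> V. A v u}"

definition induced_arcs :: "('a \<Rightarrow> 'a \<Rightarrow> bool) \<Rightarrow> 'a set \<Rightarrow> ('a \<times> 'a) set" where
  "induced_arcs A S = {(u, v). u \<in> S \<and> v \<in> S \<and> A u v}"

definition acyclic_on :: "('a \<Rightarrow> 'a \<Rightarrow> bool) \<Rightarrow> 'a set \<Rightarrow> bool" where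
  "acyclic_on A S \<longleftrightarrow> acyclic (induced_arcs A S)"

definition neighbor_acyclic :: "'a set \<Rightarrow> ('a \<Rightarrow> 'a \<Rightarrow> bool) \<Rightarrow> 'a \<Rightarrow> bool" where
  "neighbor_acyclic V A v \<longleftrightarrow>
     acyclic_on A (in_nbrs V A v) \<and> acyclic_on A (out_nbrs V A v)"

definition is_source :: "'a set \<Rightarrow> ('a \<Rightarrow> 'a \<Rightarrow> bool) \<Rightarrow> 'a \<Rightarrow> bool" where
  "is_source V A v \<longleftrightarrow> v \<in> V \<and> in_nbrs V A v = {}"

text \<open>Directed path v_0 ... v_k given as a list of vertices (distinct), consecutive arcs;
  its length is the number of arcs, i.e. length of the list minus 1.\<close>
definition dpath :: "('a \<Rightarrow> 'a \<Rightarrow> bool) \<Rightarrow> 'a list \<Rightarrow> bool" where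
  "dpath A ps \<longleftrightarrow> ps \<noteq> [] \<and> distinct ps \<and> (\<forall>i. Suc i < length ps \<longrightarrow> A (ps ! i) (ps ! Suc i))"

definition k_king :: "'a set \<Rightarrow> ('a \<Rightarrow> 'a \<Rightarrow> bool) \<Rightarrow> nat \<Rightarrow> 'a \<Rightarrow> bool" where
  "k_king V A k v \<longleftrightarrow> v \<in> V \<and> (\<forall>w\<in>V. \<exists>ps. dpath A ps \<and> hd ps = v \<and> last ps = w
       \<and> length ps \<le> Suc k)"

end

theory Submission
  imports Defs
begin

lemma dpath4: "distinct [a,b,c,d] \<Longrightarrow> A a b \<Longrightarrow> A b c \<Longrightarrow> A c d \<Longrightarrow> dpath A [a,b,c,d]"
  unfolding dpath_def by (auto simp: less_Suc_eq)

lemma dpath3: "distinct [a,b,c] \<Longrightarrow> A a b \<Longrightarrow> A b c \<Longrightarrow> dpath A [a,b,c]"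
  unfolding dpath_def by (auto simp: less_Suc_eq)

lemma dpath2: "a \<noteq> b \<Longrightarrow> A a b \<Longrightarrow> dpath A [a,b]"
  unfolding dpath_def by (auto simp: less_Suc_eq)

lemma dpath1: "dpath A [a]"
  unfolding dpath_def by auto

theorem lemma3:
  fixes V :: "'a set" and A :: "'a \<Rightarrow> 'a \<Rightarrow> bool" and vstar :: 'a
  assumes "tournament V A"
    and "vstar \<in> V"
    and "neighbor_acyclic V A vstar"
    and "\<forall>v\<in>V. \<not> is_source V A v"
  shows "k_king V A 3 vstar"
proof -
  have fin: "finite V" and inV: "\<And>u v. A u v \<Longrightarrow> u \<in> V \<and> v \<in> V" and irr: "\<And>v. \<not> A v v"
    and tot: "\<And>u v. u \<in> V \<Longrightarrow> v \<in> V \<Longrightarrow> u \<noteq> v \<Longrightarrow> A u v \<longleftrightarrow> \<not> A v u"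
    using assms(1) unfolding tournament_def by blast+
  define I where "I = in_nbrs V A vstar"
  have acI: "acyclic (induced_arcs A I)" using assms(3)
    unfolding neighbor_acyclic_def acyclic_on_def I_def by simp
  have "induced_arcs A I \<subseteq> I \<times> I" unfolding induced_arcs_def by auto
  moreover have "finite I" unfolding I_def in_nbrs_def using fin by simp
  ultimately have wfI: "wf (induced_arcs A I)"
  proof -
    have "finite (induced_arcs A I)" using \<open>induced_arcs A I \<subseteq> I \<times> I\<close> \<open>finite I\<close>
      by (meson finite_SigmaI finite_subset)
    thus ?thesis using acI finite_acyclic_wf by blast
  qed
  have nsrc: "\<And>v. v \<in> V \<Longrightarrow> \<exists>u\<in>V. A u v"
    using assms(4) unfolding is_source_def in_nbrs_def by auto
  show ?thesis unfolding k_king_def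
  proof (intro conjI ballI)
    show "vstar \<in> V" by fact
    fix w assume wV: "w \<in> V"
    show "\<exists>ps. dpath A ps \<and> hd ps = vstar \<and> last ps = w \<and> length ps \<le> Suc 3"
    proof (cases "w = vstar")
      case True then show ?thesis using dpath1[of A vstar] by (intro exI[of _ "[vstar]"]) auto
    next
      case ne: False
      show ?thesis
      proof (cases "A vstar w")
        case True then show ?thesis using dpath2[of vstar w A] ne by (intro exI[of _ "[vstar,w]"]) auto
      next
        case False
        hence wv: "A w vstar" using tot[OF wV assms(2) ne] by simp
        hence wI: "w \<in> I" unfolding I_def in_nbrs_def using wV by simp
        show ?thesis
        proof (cases "\<exists>oo\<in>V. A vstar oo \<and> A oo w")
          case True
          then obtain oo where "oo \<in> V" "A vstar oo" "A oo w" by blast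
          then show ?thesis using dpath3[of vstar oo w A] irr ne
            by (intro exI[of _ "[vstar,oo,w]"]) auto
        next
          case noO: False
          obtain u where uV: "u \<in> V" and uw: "A u w" using nsrc[OF wV] by blast
          have "u \<noteq> vstar" using uw noO False by blast
          have "\<not> A vstar u" using noO uw uV by blast
          hence "A u vstar" using tot[OF uV assms(2) \<open>u \<noteq> vstar\<close>] by simp
          hence uI: "u \<in> I" unfolding I_def in_nbrs_def using uV by simp
          obtain s where sI: "s \<in> I" and smin: "\<And>y. (y, s) \<in> induced_arcs A I \<Longrightarrow> y \<notin> I"
            using wfE_min[OF wfI uI] by blast
          have sV: "s \<in> V" and sv: "A s vstar" using sI unfolding I_def in_nbrs_def by auto
          have sw: "s \<noteq> w" using smin[of u] uI wI uw unfolding induced_arcs_def by auto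
          have "\<not> A w s" using smin[of w] wI sI unfolding induced_arcs_def by auto
          hence Asw: "A s w" using tot[OF sV wV sw] by simp
          obtain oo where oV: "oo \<in> V" and os: "A oo s" using nsrc[OF sV] by blast
          have onI: "oo \<notin> I" using smin[of oo] sI os oV unfolding induced_arcs_def I_def in_nbrs_def by auto
          have "s \<noteq> vstar" using sv irr by auto
          hence onv: "oo \<noteq> vstar" using os sv tot[OF sV assms(2)] by auto
          have vo: "A vstar oo" using onI oV tot[OF oV assms(2) onv] unfolding I_def in_nbrs_def by auto
          have "oo \<noteq> s" "oo \<noteq> w" using onI sI wI by auto
          moreover have "vstar \<noteq> s" using sv irr by auto
          ultimately show ?thesis using dpath4[of vstar oo s w A] vo os Asw onv ne sw
            by (intro exI[of _ "[vstar,oo,s,w]"]) auto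
        qed
      qed
    qed
  qed
qed

end
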